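(* There exist pairs of measurement channels corresponding to non-commuting $2$-outcome POVMs $M=\{M_0,M_1\}$, $N=\{N_0,N_1\}$ that form a Maximal Entanglement Worst Case pair. For instance, $M_0=\begin{pmatrix}\tfrac{1}{10}&0\\0&\tfrac15\end{pmatrix}$, $M_1=I-M_0$, and $N_0=\begin{pmatrix}\tfrac{3}{10}&\sqrt{\tfrac1{10}}\\\sqrt{\tfrac1{10}}&\tfrac7{10}\end{pmatrix}$, $N_1=I-N_0$, give a MEWC pair (here $M_0-N_0$ has eigenvalues $-\tfrac7{10}$ and $0$, so it is rank one).
   Context: The measurement channel of a POVM $M$ is $\Phi_M(\rho)=\sum_i\operatorname{Tr}(\rho M_i)\,|i\rangle\langle i|$. With $\Delta_\Phi=\Phi_M-\Phi_N$, input dimension $d=2$, Choi operator $J(\mathcal{S})=\sum_{ij}\mathcal{S}(|i\rangle\langle j|)\otimes|i\rangle\langle j|$, ME-norm $\|\mathcal{S}\|_{\mathrm{ME}}=\|J(\mathcal{S})/d\|_1$ and diamond norm $\|\mathcal{S}\|_\diamond=\max_{\rho_{AA'}}\|(\mathcal{S}\otimes I_{A'})\rho_{AA'}\|_1$, the pair is Maximal Entanglement Worst Case (MEWC) if $\|\Delta_\Phi\|_\diamond=d\|\Delta_\Phi\|_{\mathrm{ME}}$; for dichotomic qubit measurements with $M_1\neq N_1$ this is equivalent to $\det(M_0-N_0)=0$. *)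

theory Defs
  imports "Jordan_Normal_Form.Char_Poly"
begin

(* All matrices are complex matrices of the Jordan_Normal_Form library.
   Tensor products use the index encoding (a, a') \<mapsto> a * d' + a'. *)

definition mtrace :: "complex mat \<Rightarrow> complex" where
  "mtrace A = (\<Sum>i<dim_row A. A $$ (i, i))"

definition adj :: "complex mat \<Rightarrow> complex mat" where
  "adj A = mat (dim_col A) (dim_row A) (\<lambda>(i, j). cnj (A $$ (j, i)))"

definition psd :: "nat \<Rightarrow> complex mat \<Rightarrow> bool" where
  "psd n A \<longleftrightarrow> A \<in> carrier_mat n n \<and>
     (\<forall>v. dim_vec v = n \<longrightarrow>
        (let q = (\<Sum>i<n. \<Sum>j<n. cnj (v $ i) * A $$ (i, j) * v $ j) in Im q = 0 \<and> Re q \<ge> 0))"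

definition density :: "nat \<Rightarrow> complex mat \<Rightarrow> bool" where
  "density n \<rho> \<longleftrightarrow> psd n \<rho> \<and> mtrace \<rho> = 1"

definition povm :: "nat \<Rightarrow> nat \<Rightarrow> (nat \<Rightarrow> complex mat) \<Rightarrow> bool" where
  "povm d m M \<longleftrightarrow> (\<forall>i<m. psd d (M i)) \<and>
     (\<forall>a<d. \<forall>b<d. (\<Sum>i<m. M i $$ (a, b)) = (1\<^sub>m d) $$ (a, b))"

definition meas_channel :: "nat \<Rightarrow> (nat \<Rightarrow> complex mat) \<Rightarrow> complex mat \<Rightarrow> complex mat" where
  "meas_channel m M \<rho> = mat m m (\<lambda>(i, j). if i = j then mtrace (\<rho> * M i) else 0)"

definition unitm :: "nat \<Rightarrow> nat \<Rightarrow> nat \<Rightarrow> complex mat" where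
  "unitm d a b = mat d d (\<lambda>(i, j). if i = a \<and> j = b then 1 else 0)"

text \<open>(S \<otimes> id_{d'}) X for a linear map S from d x d to k x k matrices, X on C^d \<otimes> C^d'.\<close>
definition ext_id :: "(complex mat \<Rightarrow> complex mat) \<Rightarrow> nat \<Rightarrow> nat \<Rightarrow> nat \<Rightarrow> complex mat \<Rightarrow> complex mat" where
  "ext_id S d k d' X = mat (k * d') (k * d') (\<lambda>(p, q).
     \<Sum>a<d. \<Sum>b<d. X $$ (a * d' + p mod d', b * d' + q mod d') * S (unitm d a b) $$ (p div d', q div d'))"

text \<open>Choi operator J(S) = sum_{ij} S(|i><j|) \<otimes> |i><j|.\<close>
definition choi :: "(complex mat \<Rightarrow> complex mat) \<Rightarrow> nat \<Rightarrow> nat \<Rightarrow> complex mat" where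
  "choi S d k = mat (k * d) (k * d) (\<lambda>(p, q). S (unitm d (p mod d) (q mod d)) $$ (p div d, q div d))"

text \<open>Trace norm = sum of singular values (with multiplicity), i.e. the sum of the square roots
  of the eigenvalues of X* X counted with algebraic multiplicity.\<close>
definition trace_norm :: "complex mat \<Rightarrow> real" where
  "trace_norm X = (\<Sum>e\<in>{e. poly (char_poly (adj X * X)) e = 0}.
      real (order e (char_poly (adj X * X))) * sqrt (Re e))"

definition diamond_norm :: "(complex mat \<Rightarrow> complex mat) \<Rightarrow> nat \<Rightarrow> nat \<Rightarrow> real" where
  "diamond_norm S d k = Sup {trace_norm (ext_id S d k d \<rho>) | \<rho>. density (d * d) \<rho>}"

definition me_norm :: "(complex mat \<Rightarrow> complex mat) \<Rightarrow> nat \<Rightarrow> nat \<Rightarrow> real" where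
  "me_norm S d k = trace_norm ((1 / of_nat d) \<cdot>\<^sub>m choi S d k)"

definition MEWC :: "nat \<Rightarrow> nat \<Rightarrow> (nat \<Rightarrow> complex mat) \<Rightarrow> (nat \<Rightarrow> complex mat) \<Rightarrow> bool" where
  "MEWC d m M N \<longleftrightarrow>
     (let \<Delta> = (\<lambda>\<rho>. meas_channel m M \<rho> - meas_channel m N \<rho>)
      in diamond_norm \<Delta> d m = real d * me_norm \<Delta> d m)"

end

theory Submission
  imports Defs
begin

lemma sum_list_count_real:
  fixes f :: "'a \<Rightarrow> real"
  shows "sum_list (map f xs) = (\<Sum>x\<in>set xs. real (count_list xs x) * f x)"
proof(induction xs)
  case (Cons x xs)
  show ?case (is "?l = ?r")
  proof cases
    assume "x \<in> set xs"
    have "?l = f x + (\<Sum>x\<in>set xs. real (count_list xs x) * f x)" by (simp add: Cons.IH)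
    also have "set xs = insert x (set xs - {x})" using \<open>x \<in> set xs\<close> by blast
    also have "f x + (\<Sum>x\<in>insert x (set xs - {x}). real (count_list xs x) * f x) = ?r"
      by (simp add: sum.insert_remove eq_commute algebra_simps)
    finally show ?thesis .
  next
    assume "x \<notin> set xs"
    hence "\<And>xa. xa \<in> set xs \<Longrightarrow> x \<noteq> xa" by blast
    thus ?thesis by (simp add: Cons.IH \<open>x \<notin> set xs\<close>)
  qed
qed simp

lemma order_prod_list:
  fixes rs :: "complex list"
  shows "order e (\<Prod>r\<leftarrow>rs. [:-r,1:]) = count_list rs e"
proof (induction rs)
  case Nil thus ?case by simp
next
  case (Cons r rs)
  have nz: "(\<Prod>r\<leftarrow>rs. [:-r,1:]) \<noteq> (0::complex poly)"
    by (auto simp: prod_list_zero_iff)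
  have "order e ([:-r,1:] * (\<Prod>r\<leftarrow>rs. [:-r,1:])) = order e [:-r,1:] + order e (\<Prod>r\<leftarrow>rs. [:-r,1:])"
  proof (rule order_mult)
    have "[:-r,1:] \<noteq> (0::complex poly)" by simp
    thus "[:-r,1:] * (\<Prod>r\<leftarrow>rs. [:-r,1:]) \<noteq> 0" using nz by (metis no_zero_divisors)
  qed
  moreover have "order e [:-r,1:] = (if e = r then 1 else 0)"
  proof (cases "e = r")
    case True thus ?thesis using order_power_n_n[of r 1] by simp
  next
    case False thus ?thesis by (simp add: order_0I)
  qed
  ultimately show ?case using Cons by simp
qed

lemma roots_prod_list:
  fixes rs :: "complex list"
  shows "{e. poly (\<Prod>r\<leftarrow>rs. [:-r,1:]) e = 0} = set rs"
  by (induction rs) (auto simp: poly_prod_list)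

lemma tn_sum:
  fixes rs :: "complex list"
  shows "(\<Sum>e\<in>{e. poly (\<Prod>r\<leftarrow>rs. [:-r,1:]) e = 0}. real (order e (\<Prod>r\<leftarrow>rs. [:-r,1:])) * f e)
     = (\<Sum>r\<leftarrow>rs. f r)"
  unfolding roots_prod_list order_prod_list
  by (simp add: sum_list_count_real)

lemma less4: "(i::nat) < 4 \<longleftrightarrow> i = 0 \<or> i = 1 \<or> i = 2 \<or> i = 3" by auto
lemma less2: "(i::nat) < 2 \<longleftrightarrow> i = 0 \<or> i = 1" by auto
lemma sum4: "(\<Sum>i<(4::nat). f i) = f 0 + f 1 + f 2 + (f 3::'a::comm_monoid_add)"
  by (simp add: numeral_eq_Suc lessThan_Suc add.assoc add.commute add.left_commute)
lemma sum2: "(\<Sum>i<(2::nat). f i) = f 0 + (f 1::'a::comm_monoid_add)"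
  by (simp add: numeral_eq_Suc lessThan_Suc add.commute)

definition ml :: "nat \<Rightarrow> 'a list list \<Rightarrow> 'a mat" where
  "ml n rs = mat n n (\<lambda>(i,j). rs ! i ! j)"
lemma ml_idx[simp]: "i < n \<Longrightarrow> j < n \<Longrightarrow> ml n rs $$ (i,j) = rs ! i ! j"
  by (simp add: ml_def)
lemma ml_dim[simp]: "dim_row (ml n rs) = n" "dim_col (ml n rs) = n" "ml n rs \<in> carrier_mat n n"
  by (simp_all add: ml_def)

lemma adj_idx[simp]: "i < dim_col A \<Longrightarrow> j < dim_row A \<Longrightarrow> adj A $$ (i,j) = cnj (A $$ (j,i))"
  by (simp add: adj_def)
lemma adj_dim[simp]: "dim_row (adj A) = dim_col A" "dim_col (adj A) = dim_row A"
  by (simp_all add: adj_def)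

lemma adj_carrier: "A \<in> carrier_mat n m \<Longrightarrow> adj A \<in> carrier_mat m n"
  unfolding carrier_mat_def by simp

lemma mult4: "A \<in> carrier_mat 4 4 \<Longrightarrow> B \<in> carrier_mat 4 4 \<Longrightarrow> i < 4 \<Longrightarrow> j < 4 \<Longrightarrow>
   (A * B) $$ (i,j) = A $$ (i,0) * B $$ (0,j) + A $$ (i,1) * B $$ (1,j) + A $$ (i,2) * B $$ (2,j) + A $$ (i,3) * B $$ (3,j)"
  by (simp add: scalar_prod_def atLeast0LessThan sum4)

lemma adjZZ:
  fixes a d e :: real and b nb :: complex
  assumes "e^2 = 1"
  defines "Z \<equiv> ml 4 [[e*a, e*b, 0, 0],[e*cnj b, e*d,0,0],[0,0,-e*a,-e*b],[0,0,-e*cnj b,-e*d]]"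
  defines "nb \<equiv> complex_of_real ((cmod b)^2)"
  shows "adj Z * Z = ml 4 [[a*a+nb, (a+d)*b, 0, 0],[(a+d)*cnj b, nb+d*d,0,0],[0,0,a*a+nb, (a+d)*b],[0,0,(a+d)*cnj b, nb+d*d]]"
proof -
  have e: "complex_of_real e * complex_of_real e = 1" using assms(1)
    by (metis of_real_1 of_real_mult power2_eq_square)
  have nb: "cnj b * b = nb" "b * cnj b = nb" unfolding nb_def
    by (metis complex_norm_square mult.commute)+
  have dZ1: "Z \<in> carrier_mat 4 4" unfolding Z_def by (rule ml_dim(3))
  have dZ: "Z \<in> carrier_mat 4 4" "adj Z \<in> carrier_mat 4 4" using dZ1 adj_carrier by blast+
  have Zv: "Z $$ (0,0) = e*a" "Z $$ (0,1) = e*b" "Z $$ (0,2) = 0" "Z $$ (0,3) = 0" "Z $$ (1,0) = e*cnj b" "Z $$ (1,1) = e*d" "Z $$ (1,2) = 0" "Z $$ (1,3) = 0" "Z $$ (2,0) = 0" "Z $$ (2,1) = 0" "Z $$ (2,2) = -e*a" "Z $$ (2,3) = -e*b" "Z $$ (3,0) = 0" "Z $$ (3,1) = 0" "Z $$ (3,2) = -e*cnj b" "Z $$ (3,3) = -e*d"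
    unfolding Z_def by (simp_all add: ml_idx)
  have aZ: "adj Z $$ (i,j) = cnj (Z $$ (j,i))" if "i < 4" "j < 4" for i j
    using that dZ by auto
  show ?thesis
    apply (rule eq_matI)
    subgoal for i j
      apply (simp only: ml_dim)
      apply (subst mult4[OF dZ(2) dZ(1)], assumption, assumption)
      apply (simp only: less4)
      apply (elim disjE)
      apply (simp_all add: aZ Zv del: One_nat_def)
      apply (simp_all add: algebra_simps e nb)
      done
    using dZ by auto
qed


lemma det2: assumes "A \<in> carrier_mat 2 2"
  shows "det A = A$$(0,0)*A$$(1,1) - A$$(0,1)*A$$(1,0)"
  using assms
  by (subst laplace_expansion_column[OF assms, of 0]) (auto simp: cofactor_def mat_delete_def det_def numeral_2_eq_2 lessThan_Suc)

lemma cpm_idx: "A \<in> carrier_mat n n \<Longrightarrow> i < n \<Longrightarrow> j < n \<Longrightarrow>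
  char_poly_matrix A $$ (i,j) = (if i = j then [:0,1:] else 0) + [:- A $$ (i,j):]"
  unfolding char_poly_matrix_def by auto

lemma charpoly_block:
  fixes p q r s :: complex
  shows "char_poly (ml 4 [[p,q,0,0],[r,s,0,0],[0,0,p,q],[0,0,r,s]]) =
     ([:-p,1:] * [:-s,1:] - [:q*r:]) ^ 2"
proof -
  let ?Q = "ml 2 [[p,q],[r,s]]"
  let ?C = "char_poly_matrix ?Q"
  have C: "?C \<in> carrier_mat 2 2" by simp
  have fb: "four_block_mat ?C (0\<^sub>m 2 2) (0\<^sub>m 2 2) ?C $$ (i,j) = (if i < 2 then if j < 2 then ?C $$ (i,j) else 0 else if j < 2 then 0 else ?C $$ (i-2,j-2))"
    if "i < 4" "j < 4" for i j
    using that carrier_matD[OF C] by (subst index_mat_four_block) auto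
  have eq: "char_poly_matrix (ml 4 [[p,q,0,0],[r,s,0,0],[0,0,p,q],[0,0,r,s]]) = four_block_mat ?C (0\<^sub>m 2 2) (0\<^sub>m 2 2) ?C"
    apply (rule eq_matI)
    subgoal for i j
      apply (subgoal_tac "i < 4 \<and> j < 4")
       apply (subst fb, simp, simp)
      apply (subst cpm_idx[OF ml_dim(3)], simp, simp)
      apply (simp only: less4)
      apply (elim conjE disjE)
      apply (simp_all add: cpm_idx[OF ml_dim(3)] del: One_nat_def)
      using carrier_matD[OF C] by simp
    by (simp_all add: char_poly_matrix_def)
  have "det ?C = [:-p,1:] * [:-s,1:] - [:q*r:]"
    by (simp add: det2[OF C] cpm_idx[OF ml_dim(3)] del: One_nat_def)
  then show ?thesis
    unfolding char_poly_def eq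
    by (subst det_four_block_mat_lower_left_zero[OF C _ refl C]) (auto simp: power2_eq_square)
qed



lemma quad_poly: "[:-p,1:] * [:-s,1:] - [:c:] = [:p*s - c, -(p+s), 1::complex:]"
  by (simp add: algebra_simps)

lemma tn_block:
  fixes a d e :: real and b :: complex
  assumes a: "a \<ge> 0" and d: "d \<ge> 0" and bd: "(cmod b)^2 \<le> a*d" and e: "e^2 = 1"
  shows "trace_norm (ml 4 [[e*a, e*b, 0, 0],[e*cnj b, e*d,0,0],[0,0,-e*a,-e*b],[0,0,-e*cnj b,-e*d]]) = 2*(a+d)"
proof -
  define k where "k = (cmod b)^2"
  define Z where "Z = ml 4 [[e*a, e*b, 0, 0],[e*cnj b, e*d,0,0],[0,0,-e*a,-e*b],[0,0,-e*cnj b,-e*d]]"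
  define p where "p = complex_of_real (a*a) + complex_of_real k"
  define q where "q = complex_of_real (a+d) * b"
  define r where "r = complex_of_real (a+d) * cnj b"
  define s where "s = complex_of_real k + complex_of_real (d*d)"
  have AZ: "adj Z * Z = ml 4 [[p,q,0,0],[r,s,0,0],[0,0,p,q],[0,0,r,s]]"
    unfolding Z_def p_def q_def r_def s_def k_def using adjZZ[OF e] by simp
  define rt where "rt = sqrt ((a-d)^2 + 4*k)"
  define m1 where "m1 = (a+d+rt)/2"
  define m2 where "m2 = (a+d-rt)/2"
  have k0: "k \<ge> 0" unfolding k_def by simp
  have rr: "0 \<le> (a-d)^2 + 4*k" using k0 by (intro add_nonneg_nonneg) simp_all
  have rt2: "rt^2 = (a-d)^2 + 4*k" unfolding rt_def using rr by (rule real_sqrt_pow2)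
  have rt0: "rt \<ge> 0" unfolding rt_def using rr by simp
  have "rt \<le> a + d"
  proof -
    have "rt^2 \<le> (a+d)^2" using rt2 bd unfolding k_def by (simp add: power2_eq_square algebra_simps)
    thus ?thesis using a d rt0 by (simp add: abs_le_square_iff power2_le_iff_abs_le)
  qed
  hence m20: "m2 \<ge> 0" unfolding m2_def by simp
  have m10: "m1 \<ge> 0" unfolding m1_def using a d rt0 by simp
  have sum12: "m1 + m2 = a + d" unfolding m1_def m2_def by (simp add: field_simps)
  have prod12: "m1 * m2 = a*d - k" unfolding m1_def m2_def
    using rt2 by (simp add: field_simps power2_eq_square)
  have qr: "q * r = complex_of_real ((a+d)^2 * k)"
  proof -
    have "b * cnj b = complex_of_real k" unfolding k_def by (metis complex_norm_square)
    have "q * r = complex_of_real (a+d) * complex_of_real (a+d) * (b * cnj b)" unfolding q_def r_def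
      by (simp add: mult_ac)
    hence "q * r = complex_of_real ((a+d)^2) * complex_of_real k" using \<open>b * cnj b = complex_of_real k\<close>
      by (simp add: power2_eq_square)
    thus ?thesis by simp
  qed
  have c0: "p * s - q * r = complex_of_real (m1^2) * complex_of_real (m2^2)"
  proof -
    have "(a*a+k)*(k+d*d) - (a+d)^2*k = (m1*m2)^2" unfolding prod12 by (simp add: power2_eq_square algebra_simps)
    hence "complex_of_real ((a*a+k)*(k+d*d) - (a+d)^2*k) = complex_of_real (m1^2 * m2^2)"
      by (simp add: power_mult_distrib)
    thus ?thesis unfolding qr p_def s_def by (simp add: algebra_simps)
  qed
  have c1: "p + s = complex_of_real (m1^2) + complex_of_real (m2^2)"
  proof -
    have "m1^2 + m2^2 = (m1+m2)^2 - 2*(m1*m2)" by (simp add: power2_eq_square algebra_simps)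
    also have "\<dots> = a*a + k + (k + d*d)" unfolding sum12 prod12 by (simp add: power2_eq_square algebra_simps)
    finally show ?thesis unfolding p_def s_def by (metis of_real_add add.assoc)
  qed
  define \<alpha> where "\<alpha> = complex_of_real (m1^2)"
  define \<beta> where "\<beta> = complex_of_real (m2^2)"
  have fac: "[:-p,1:] * [:-s,1:] - [:q*r:] = [:-\<alpha>,1:] * [:-\<beta>,1:]"
    unfolding quad_poly \<alpha>_def \<beta>_def c0 c1 by (simp add: algebra_simps)
  have cp: "char_poly (adj Z * Z) = (\<Prod>x\<leftarrow>[\<alpha>,\<beta>,\<alpha>,\<beta>]. [:-x,1:])"
    unfolding AZ charpoly_block fac by (simp add: power2_eq_square algebra_simps)
  have "trace_norm Z = (\<Sum>x\<leftarrow>[\<alpha>,\<beta>,\<alpha>,\<beta>]. sqrt (Re x))"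
    unfolding trace_norm_def cp by (rule tn_sum)
  also have "\<dots> = 2 * (m1 + m2)" unfolding \<alpha>_def \<beta>_def using m10 m20 by simp
  finally show ?thesis unfolding Z_def sum12 .
qed



lemma qf2: "(\<Sum>i<(2::nat). \<Sum>j<(2::nat). cnj (v $ i) * A $$ (i, j) * v $ j) =
  cnj (v$0) * A$$(0,0) * v$0 + cnj (v$0) * A$$(0,1) * v$1 + cnj (v$1) * A$$(1,0) * v$0 + cnj (v$1) * A$$(1,1) * v$1"
  by (simp add: sum2 del: One_nat_def)

lemma real_ineq2:
  fixes a d B X Y :: real
  assumes "a \<ge> 0" "d \<ge> 0" "B \<ge> 0" "B^2 \<le> a*d" "X \<ge> 0" "Y \<ge> 0"
  shows "2*B*X*Y \<le> a*X^2 + d*Y^2"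
proof (cases "a = 0")
  case True
  hence "B^2 = 0" using assms by (intro antisym) simp_all
  hence "B = 0" by simp
  thus ?thesis using assms by simp
next
  case False
  hence a: "a > 0" using assms by simp
  have "a*(a*X^2 + d*Y^2 - 2*B*X*Y) = (a*X - B*Y)^2 + (a*d - B^2)*Y^2"
    by (simp add: power2_eq_square algebra_simps)
  also have "\<dots> \<ge> 0" using assms by (intro add_nonneg_nonneg mult_nonneg_nonneg) simp_all
  finally have "a*(a*X^2 + d*Y^2 - 2*B*X*Y) \<ge> 0" .
  hence "a*X^2 + d*Y^2 - 2*B*X*Y \<ge> 0" using a by (simp add: zero_le_mult_iff)
  thus ?thesis by simp
qed

lemma psd2_intro:
  fixes A :: "complex mat" and a d :: real
  assumes A: "A \<in> carrier_mat 2 2" and a: "A$$(0,0) = complex_of_real a" and d: "A$$(1,1) = complex_of_real d"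
    and h: "A$$(1,0) = cnj (A$$(0,1))" and a0: "a \<ge> 0" and d0: "d \<ge> 0" and bd: "(cmod (A$$(0,1)))^2 \<le> a*d"
  shows "psd 2 A"
  unfolding psd_def Let_def
proof (intro conjI allI impI A)
  fix v :: "complex vec"
  define x where "x = v$0"
  define y where "y = v$1"
  define b where "b = A$$(0,1)"
  define z where "z = cnj x * b * y"
  have q: "(\<Sum>i<2. \<Sum>j<2. cnj (v $ i) * A $$ (i, j) * v $ j) =
     complex_of_real (a * (cmod x)^2 + d * (cmod y)^2) + (z + cnj z)"
  proof -
    have hx: "cnj x * x = complex_of_real ((cmod x)^2)" by (metis complex_norm_square mult.commute)
    have hy: "cnj y * y = complex_of_real ((cmod y)^2)" by (metis complex_norm_square mult.commute)
    have "(\<Sum>i<2. \<Sum>j<2. cnj (v $ i) * A $$ (i, j) * v $ j) =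
       complex_of_real a * (cnj x * x) + complex_of_real d * (cnj y * y) + (z + cnj z)"
      unfolding qf2 a d h x_def[symmetric] y_def[symmetric] b_def[symmetric] z_def
      by (simp add: algebra_simps)
    thus ?thesis unfolding hx hy by simp
  qed
  have zz: "z + cnj z = complex_of_real (2 * Re z)" by (simp add: complex_eq_iff)
  show "Im (\<Sum>i<2. \<Sum>j<2. cnj (v $ i) * A $$ (i, j) * v $ j) = 0" unfolding q zz by simp
  have "\<bar>Re z\<bar> \<le> cmod z" by (rule abs_Re_le_cmod)
  also have "cmod z = cmod x * cmod b * cmod y" unfolding z_def by (simp add: norm_mult)
  finally have "- (cmod x * cmod b * cmod y) \<le> Re z" by simp
  moreover have "2 * cmod b * cmod x * cmod y \<le> a * (cmod x)^2 + d * (cmod y)^2"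
    using bd a0 d0 unfolding b_def by (intro real_ineq2) simp_all
  ultimately show "0 \<le> Re (\<Sum>i<2. \<Sum>j<2. cnj (v $ i) * A $$ (i, j) * v $ j)" unfolding q zz
    by (simp add: algebra_simps)
qed



lemma psd2_form:
  assumes "psd 2 A"
  shows "Im (cnj x * A$$(0,0) * x + cnj x * A$$(0,1) * y + cnj y * A$$(1,0) * x + cnj y * A$$(1,1) * y) = 0 \<and>
         Re (cnj x * A$$(0,0) * x + cnj x * A$$(0,1) * y + cnj y * A$$(1,0) * x + cnj y * A$$(1,1) * y) \<ge> 0"
proof -
  let ?v = "vec 2 (\<lambda>i. if i = 0 then x else y)"
  have "dim_vec ?v = 2" by simp
  with assms have "Im (\<Sum>i<(2::nat). \<Sum>j<(2::nat). cnj (?v $ i) * A $$ (i, j) * ?v $ j) = 0 \<and>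
     Re (\<Sum>i<(2::nat). \<Sum>j<(2::nat). cnj (?v $ i) * A $$ (i, j) * ?v $ j) \<ge> 0"
    unfolding psd_def Let_def by blast
  thus ?thesis unfolding qf2 by simp
qed

lemma psd2_facts:
  assumes P: "psd 2 A"
  shows "A \<in> carrier_mat 2 2" "A$$(0,0) = complex_of_real (Re (A$$(0,0)))" "Re (A$$(0,0)) \<ge> 0"
    "A$$(1,1) = complex_of_real (Re (A$$(1,1)))" "Re (A$$(1,1)) \<ge> 0"
    "A$$(1,0) = cnj (A$$(0,1))" "(cmod (A$$(0,1)))^2 \<le> Re (A$$(0,0)) * Re (A$$(1,1))"
proof -
  show "A \<in> carrier_mat 2 2" using P unfolding psd_def by simp
  note F = psd2_form[OF P]
  from F[of 1 0] show a: "A$$(0,0) = complex_of_real (Re (A$$(0,0)))" "Re (A$$(0,0)) \<ge> 0"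
    by (simp_all add: complex_eq_iff)
  from F[of 0 1] show d: "A$$(1,1) = complex_of_real (Re (A$$(1,1)))" "Re (A$$(1,1)) \<ge> 0"
    by (simp_all add: complex_eq_iff)
  have ia: "Im (A$$(0,0)) = 0" "Im (A$$(1,1)) = 0" using a(1) d(1) by (metis Im_complex_of_real)+
  from F[of 1 1] have i1: "Im (A$$(0,1)) + Im (A$$(1,0)) = 0" using ia by (simp del: One_nat_def)
  from F[of 1 \<i>] have i2: "Re (A$$(0,1)) - Re (A$$(1,0)) = 0" using ia by (simp del: One_nat_def)
  show h: "A$$(1,0) = cnj (A$$(0,1))" using i1 i2 by (simp add: complex_eq_iff)
  define a where "a = Re (A$$(0,0))"
  define dd where "dd = Re (A$$(1,1))"
  define b where "b = A$$(0,1)"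
  define k where "k = (cmod b)^2"
  have bb: "cnj b * b = complex_of_real k" "b * cnj b = complex_of_real k" unfolding k_def
    by (metis complex_norm_square mult.commute)+
  have A00: "A$$(0,0) = complex_of_real a" using a(1) unfolding a_def .
  have A11: "A$$(1,1) = complex_of_real dd" using d(1) unfolding dd_def .
  have A10: "A$$(1,0) = cnj b" using h unfolding b_def .
  have A01: "A$$(0,1) = b" unfolding b_def ..
  have k0: "k \<ge> 0" unfolding k_def by simp
  have a0: "a \<ge> 0" "dd \<ge> 0" using a d unfolding a_def dd_def by auto
  have e1: "cnj (-b) * A$$(0,0) * (-b) + cnj (-b) * A$$(0,1) * complex_of_real a + cnj (complex_of_real a) * A$$(1,0) * (-b) + cnj (complex_of_real a) * A$$(1,1) * complex_of_real a
     = complex_of_real (a * (a*dd - k))"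
    unfolding A00 A01 A10 A11
  proof -
    have "cnj (-b) * complex_of_real a * (-b) + cnj (-b) * b * complex_of_real a + cnj (complex_of_real a) * cnj b * (-b) + cnj (complex_of_real a) * complex_of_real dd * complex_of_real a
      = complex_of_real a * (cnj b * b) - complex_of_real a * (cnj b * b) - complex_of_real a * (b * cnj b) + complex_of_real (a*a*dd)"
      by (simp add: algebra_simps)
    thus "cnj (-b) * complex_of_real a * (-b) + cnj (-b) * b * complex_of_real a + cnj (complex_of_real a) * cnj b * (-b) + cnj (complex_of_real a) * complex_of_real dd * complex_of_real a
     = complex_of_real (a * (a*dd - k))" unfolding bb by (simp add: algebra_simps)
  qed
  have r1: "a * (a*dd - k) \<ge> 0" using F[of "-b" "complex_of_real a"] unfolding e1 by simp
  show "(cmod (A$$(0,1)))^2 \<le> Re (A$$(0,0)) * Re (A$$(1,1))"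
  proof (cases "a = 0")
    case False
    hence "a > 0" using a0 by simp
    hence "a*dd - k \<ge> 0" using r1 by (simp add: zero_le_mult_iff)
    thus ?thesis unfolding a_def[symmetric] dd_def[symmetric] b_def[symmetric] k_def by simp
  next
    case True
    have e2: "cnj (-b * complex_of_real (dd+1)) * A$$(0,0) * (-b * complex_of_real (dd+1)) + cnj (-b * complex_of_real (dd+1)) * A$$(0,1) * complex_of_real k + cnj (complex_of_real k) * A$$(1,0) * (-b * complex_of_real (dd+1)) + cnj (complex_of_real k) * A$$(1,1) * complex_of_real k
      = complex_of_real (- (dd+2) * k * k)"
      unfolding A00 A01 A10 A11 True
    proof -
      have "cnj (-b * complex_of_real (dd+1)) * complex_of_real 0 * (-b * complex_of_real (dd+1)) + cnj (-b * complex_of_real (dd+1)) * b * complex_of_real k + cnj (complex_of_real k) * cnj b * (-b * complex_of_real (dd+1)) + cnj (complex_of_real k) * complex_of_real dd * complex_of_real k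
        = - complex_of_real (dd+1) * complex_of_real k * (cnj b * b) - complex_of_real (dd+1) * complex_of_real k * (cnj b * b) + complex_of_real (dd*k*k)"
        by (simp add: algebra_simps)
      thus "cnj (-b * complex_of_real (dd+1)) * complex_of_real 0 * (-b * complex_of_real (dd+1)) + cnj (-b * complex_of_real (dd+1)) * b * complex_of_real k + cnj (complex_of_real k) * cnj b * (-b * complex_of_real (dd+1)) + cnj (complex_of_real k) * complex_of_real dd * complex_of_real k
        = complex_of_real (- (dd+2) * k * k)" unfolding bb by (simp add: algebra_simps)
    qed
    have "- (dd+2) * k * k \<ge> 0" using F[of "-b * complex_of_real (dd+1)" "complex_of_real k"] unfolding e2 by simp
    hence "(dd+2) * (k * k) \<le> 0" by (simp add: algebra_simps)
    moreover have "dd + 2 > 0" using a0 by simp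
    ultimately have "k * k \<le> 0" by (simp add: mult_le_0_iff)
    hence "k * k = 0" by (intro antisym) simp_all
    hence "k = 0" by simp
    thus ?thesis unfolding a_def[symmetric] dd_def[symmetric] b_def[symmetric] k_def using True by simp
  qed
qed


declare One_nat_def [simp del]

definition Mf :: "nat \<Rightarrow> complex mat" where
  "Mf \<equiv> (\<lambda>i. let M0 = mat_of_rows_list 2 [[1/10, 0], [0, 1/5]]
                    in if i = 0 then M0 else 1\<^sub>m 2 - M0)"
definition Nf :: "nat \<Rightarrow> complex mat" where
  "Nf \<equiv> (\<lambda>i. let N0 = mat_of_rows_list 2
                             [[3/10, complex_of_real (sqrt (1/10))],
                              [complex_of_real (sqrt (1/10)), 7/10]]
                    in if i = 0 then N0 else 1\<^sub>m 2 - N0)"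

definition S :: complex where "S = complex_of_real (sqrt (1/10))"

lemma mrl2: "mat_of_rows_list 2 [[a,b],[c,d]] = ml 2 [[a,b],[c,d]]"
  unfolding mat_of_rows_list_def ml_def by (simp add: numeral_2_eq_2)

lemma one_minus2: "1\<^sub>m 2 - ml 2 [[a,b],[c,d]] = ml 2 [[1-a,-b],[-c,1-(d::complex)]]"
  apply (rule eq_matI)
  subgoal for i j
    apply (simp only: ml_dim less2)
    apply (elim disjE)
    apply (simp_all del: One_nat_def)
    done
  by simp_all

lemma Mf0: "Mf 0 = ml 2 [[1/10, 0], [0, 1/5]]" unfolding Mf_def by (simp add: mrl2)
lemma Mf1: "i \<noteq> 0 \<Longrightarrow> Mf i = ml 2 [[9/10, 0], [0, 4/5]]" unfolding Mf_def
  by (simp add: mrl2 one_minus2)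
lemma Nf0: "Nf 0 = ml 2 [[3/10, S], [S, 7/10]]" unfolding Nf_def S_def by (simp add: mrl2)
lemma Nf1: "i \<noteq> 0 \<Longrightarrow> Nf i = ml 2 [[7/10, -S], [-S, 3/10]]" unfolding Nf_def S_def
  by (simp add: mrl2 one_minus2)

lemma S2: "S * S = 1/10"
proof -
  have "S * S = complex_of_real (sqrt (1/10) * sqrt (1/10))" unfolding S_def by (simp only: of_real_mult)
  also have "sqrt (1/10) * sqrt (1/10) = (1/10::real)" by simp
  finally show ?thesis by simp
qed
lemma S0: "S \<noteq> 0" unfolding S_def by simp
lemma cmodS: "(cmod S)^2 = 1/10" unfolding S_def by simp

lemma psd_Mf: "psd 2 (Mf i)"
proof (cases "i = 0")
  case True show ?thesis unfolding True Mf0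
    by (rule psd2_intro[where a="1/10" and d="1/5"]) simp_all
next
  case False show ?thesis unfolding Mf1[OF False]
    by (rule psd2_intro[where a="9/10" and d="4/5"]) simp_all
qed

lemma psd_Nf: "psd 2 (Nf i)"
proof (cases "i = 0")
  case True show ?thesis unfolding True Nf0
    by (rule psd2_intro[where a="3/10" and d="7/10"]) (simp_all add: cmodS S_def)
next
  case False show ?thesis unfolding Nf1[OF False]
    by (rule psd2_intro[where a="7/10" and d="3/10"]) (simp_all add: cmodS S_def)
qed

lemma povm_Mf: "povm 2 2 Mf"
  unfolding povm_def
proof (intro conjI allI impI psd_Mf)
  fix a b :: nat assume "a < 2" "b < 2"
  hence "(a = 0 \<or> a = 1) \<and> (b = 0 \<or> b = 1)" by auto
  thus "(\<Sum>i<2. Mf i $$ (a, b)) = 1\<^sub>m 2 $$ (a, b)"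
    unfolding sum2 Mf0 Mf1[OF one_neq_zero] by (elim conjE disjE) (simp_all del: One_nat_def)
qed

lemma povm_Nf: "povm 2 2 Nf"
  unfolding povm_def
proof (intro conjI allI impI psd_Nf)
  fix a b :: nat assume "a < 2" "b < 2"
  hence "(a = 0 \<or> a = 1) \<and> (b = 0 \<or> b = 1)" by auto
  thus "(\<Sum>i<2. Nf i $$ (a, b)) = 1\<^sub>m 2 $$ (a, b)"
    unfolding sum2 Nf0 Nf1[OF one_neq_zero] by (elim conjE disjE) (simp_all del: One_nat_def)
qed

lemma mult2: "A \<in> carrier_mat 2 2 \<Longrightarrow> B \<in> carrier_mat 2 2 \<Longrightarrow> i < 2 \<Longrightarrow> j < 2 \<Longrightarrow>
   (A * B) $$ (i,j) = A $$ (i,0) * B $$ (0,j) + A $$ (i,1) * B $$ (1,j)"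
  by (simp add: scalar_prod_def atLeast0LessThan sum2)

lemma noncomm: "Mf 0 * Nf 0 \<noteq> Nf 0 * Mf 0"
proof
  assume "Mf 0 * Nf 0 = Nf 0 * Mf 0"
  hence "(Mf 0 * Nf 0) $$ (0,1) = (Nf 0 * Mf 0) $$ (0,1)" by simp
  hence "S / 10 = S / 5" unfolding Mf0 Nf0
    by (simp only: mult2[OF ml_dim(3) ml_dim(3)] zero_less_numeral one_less_numeral_iff semiring_norm(76)) (simp del: One_nat_def)
  thus False using S0 by simp
qed


declare One_nat_def [simp del]

definition Dl :: "complex mat \<Rightarrow> complex mat" where
  "Dl = (\<lambda>\<rho>. meas_channel 2 Mf \<rho> - meas_channel 2 Nf \<rho>)"

lemma unitm_idx: "i < n \<Longrightarrow> j < n \<Longrightarrow> unitm n a b $$ (i,j) = (if i = a \<and> j = b then 1 else 0)"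
  unfolding unitm_def by simp
lemma unitm_carrier: "unitm n a b \<in> carrier_mat n n" unfolding unitm_def by simp

lemma Mf_carrier: "Mf i \<in> carrier_mat 2 2" by (cases "i = 0") (simp_all add: Mf0 Mf1)
lemma Nf_carrier: "Nf i \<in> carrier_mat 2 2" by (cases "i = 0") (simp_all add: Nf0 Nf1)

lemma mtrace_unit: assumes A: "A \<in> carrier_mat 2 2" and ab: "a < 2" "b < 2"
  shows "mtrace (unitm 2 a b * A) = A $$ (b,a)"
proof -
  have "mtrace (unitm 2 a b * A) = (unitm 2 a b * A) $$ (0,0) + (unitm 2 a b * A) $$ (1,1)"
    unfolding mtrace_def using A unitm_carrier[of 2 a b] by (simp add: sum2)
  also have "\<dots> = A $$ (b,a)"
    using ab by (simp add: mult2[OF unitm_carrier A] unitm_idx less2) (auto simp: less2)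
  finally show ?thesis .
qed

lemma Dl_U: assumes "a < 2" "b < 2" "i < 2" "j < 2"
  shows "Dl (unitm 2 a b) $$ (i,j) = (if i = j then Mf i $$ (b,a) - Nf i $$ (b,a) else 0)"
  using assms unfolding Dl_def meas_channel_def
  by (simp add: mtrace_unit Mf_carrier Nf_carrier)

definition wf :: "complex mat \<Rightarrow> nat \<Rightarrow> nat \<Rightarrow> complex" where
  "wf \<rho> i j = (1/5) * \<rho> $$ (i,j) + S * (\<rho> $$ (i,2+j) + \<rho> $$ (2+i,j)) + (1/2) * \<rho> $$ (2+i,2+j)"

lemma ext_Dl: "ext_id Dl 2 2 2 \<rho> = ml 4 [[-wf \<rho> 0 0, -wf \<rho> 0 1, 0, 0],[-wf \<rho> 1 0, -wf \<rho> 1 1, 0, 0],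
   [0, 0, wf \<rho> 0 0, wf \<rho> 0 1],[0, 0, wf \<rho> 1 0, wf \<rho> 1 1]]"
  apply (rule eq_matI)
  subgoal for p q
    apply (simp only: ml_dim less4)
    apply (elim disjE)
    apply (simp_all add: ext_id_def sum2 Dl_U Mf0 Mf1 Nf0 Nf1 wf_def algebra_simps)
    done
  by (simp_all add: ext_id_def)

lemma choi_Dl: "(1 / of_nat 2) \<cdot>\<^sub>m choi Dl 2 2 = ml 4 [[-1/10, -S/2, 0, 0],[-S/2, -1/4, 0, 0],
   [0, 0, 1/10, S/2],[0, 0, S/2, 1/4]]"
  apply (rule eq_matI)
  subgoal for p q
    apply (simp only: ml_dim less4)
    apply (elim disjE)
    apply (simp_all add: choi_def Dl_U Mf0 Mf1 Nf0 Nf1)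
    done
  by (simp_all add: choi_def)

definition C0 :: complex where "C0 = complex_of_real (sqrt (1/5))"
definition C1 :: complex where "C1 = complex_of_real (sqrt (1/2))"
lemma C00: "C0 * C0 = 1/5"
proof -
  have "C0 * C0 = complex_of_real (sqrt (1/5) * sqrt (1/5))" unfolding C0_def by (simp only: of_real_mult)
  also have "sqrt (1/5) * sqrt (1/5) = (1/5::real)" by simp
  finally show ?thesis by simp
qed
lemma C11: "C1 * C1 = 1/2"
proof -
  have "C1 * C1 = complex_of_real (sqrt (1/2) * sqrt (1/2))" unfolding C1_def by (simp only: of_real_mult)
  also have "sqrt (1/2) * sqrt (1/2) = (1/2::real)" by simp
  finally show ?thesis by simp
qed
lemma C01: "C0 * C1 = S"
proof -
  have "C0 * C1 = complex_of_real (sqrt (1/5) * sqrt (1/2))" unfolding C0_def C1_def by (simp only: of_real_mult)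
  also have "sqrt (1/5) * sqrt (1/2) = sqrt (1/10::real)" by (simp add: real_sqrt_mult[symmetric])
  finally show ?thesis unfolding S_def by simp
qed
lemma cnjC: "cnj C0 = C0" "cnj C1 = C1" unfolding C0_def C1_def by simp_all

lemma wf_C: "wf \<rho> i j = C0*C0 * \<rho> $$ (i,j) + C0*C1 * (\<rho> $$ (i,2+j) + \<rho> $$ (2+i,j)) + C1*C1 * \<rho> $$ (2+i,2+j)"
  unfolding wf_def C00 C01 C11 ..

lemma wf_vals:
  "wf \<rho> 0 0 = C0*C0 * \<rho> $$ (0,0) + C0*C1 * (\<rho> $$ (0,2) + \<rho> $$ (2,0)) + C1*C1 * \<rho> $$ (2,2)"
  "wf \<rho> 0 1 = C0*C0 * \<rho> $$ (0,1) + C0*C1 * (\<rho> $$ (0,3) + \<rho> $$ (2,1)) + C1*C1 * \<rho> $$ (2,3)"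
  "wf \<rho> 1 0 = C0*C0 * \<rho> $$ (1,0) + C0*C1 * (\<rho> $$ (1,2) + \<rho> $$ (3,0)) + C1*C1 * \<rho> $$ (3,2)"
  "wf \<rho> 1 1 = C0*C0 * \<rho> $$ (1,1) + C0*C1 * (\<rho> $$ (1,3) + \<rho> $$ (3,1)) + C1*C1 * \<rho> $$ (3,3)"
  unfolding wf_C by simp_all

lemma qf4: "(\<Sum>i<(4::nat). \<Sum>j<(4::nat). cnj (x $ i) * A $$ (i, j) * x $ j) =
  (\<Sum>i\<in>{0,1,2,3::nat}. \<Sum>j\<in>{0,1,2,3::nat}. cnj (x $ i) * A $$ (i, j) * x $ j)"
proof -
  have "{..<(4::nat)} = {0,1,2,3}" by auto
  thus ?thesis by simp
qed

lemma psd4_form: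
  assumes "psd 4 A" 
  shows "Im (\<Sum>i\<in>{0,1,2,3::nat}. \<Sum>j\<in>{0,1,2,3::nat}. cnj (f i) * A $$ (i, j) * f j) = 0 \<and>
         Re (\<Sum>i\<in>{0,1,2,3::nat}. \<Sum>j\<in>{0,1,2,3::nat}. cnj (f i) * A $$ (i, j) * f j) \<ge> 0"
proof -
  let ?v = "vec 4 f"
  have "dim_vec ?v = 4" by simp
  with assms have "Im (\<Sum>i<(4::nat). \<Sum>j<(4::nat). cnj (?v $ i) * A $$ (i, j) * ?v $ j) = 0 \<and>
     Re (\<Sum>i<(4::nat). \<Sum>j<(4::nat). cnj (?v $ i) * A $$ (i, j) * ?v $ j) \<ge> 0"
    unfolding psd_def Let_def by blast
  thus ?thesis unfolding qf4 by simp
qed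

lemma psd_W: assumes P: "psd 4 \<rho>"
  shows "psd 2 (ml 2 [[wf \<rho> 0 0, wf \<rho> 0 1],[wf \<rho> 1 0, wf \<rho> 1 1]])"
  unfolding psd_def Let_def
proof (intro conjI allI impI ml_dim)
  fix v :: "complex vec"
  define f where "f k = (if k = 0 then C0 * v$0 else if k = 1 then C0 * v$1 else if k = 2 then C1 * v$0 else C1 * v$1)" for k :: nat
  have eq: "(\<Sum>i<2. \<Sum>j<2. cnj (v $ i) * ml 2 [[wf \<rho> 0 0, wf \<rho> 0 1],[wf \<rho> 1 0, wf \<rho> 1 1]] $$ (i, j) * v $ j)
     = (\<Sum>i\<in>{0,1,2,3::nat}. \<Sum>j\<in>{0,1,2,3::nat}. cnj (f i) * \<rho> $$ (i, j) * f j)"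
    unfolding qf2 by (simp add: f_def wf_vals cnjC algebra_simps)
  show "Im (\<Sum>i<2. \<Sum>j<2. cnj (v $ i) * ml 2 [[wf \<rho> 0 0, wf \<rho> 0 1],[wf \<rho> 1 0, wf \<rho> 1 1]] $$ (i, j) * v $ j) = 0"
    unfolding eq using psd4_form[OF P] by blast
  show "0 \<le> Re (\<Sum>i<2. \<Sum>j<2. cnj (v $ i) * ml 2 [[wf \<rho> 0 0, wf \<rho> 0 1],[wf \<rho> 1 0, wf \<rho> 1 1]] $$ (i, j) * v $ j)"
    unfolding eq using psd4_form[OF P] by blast
qed

lemma trace_W: assumes P: "psd 4 \<rho>" and T: "mtrace \<rho> = 1"
  shows "Re (wf \<rho> 0 0) + Re (wf \<rho> 1 1) \<le> 7/10"
proof -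
  define f0 where "f0 k = (if k = 0 then -C1 else if k = 2 then C0 else 0)" for k :: nat
  define f1 where "f1 k = (if k = 1 then -C1 else if k = 3 then C0 else 0)" for k :: nat
  define q0 where "q0 = (\<Sum>i\<in>{0,1,2,3::nat}. \<Sum>j\<in>{0,1,2,3::nat}. cnj (f0 i) * \<rho> $$ (i, j) * f0 j)"
  define q1 where "q1 = (\<Sum>i\<in>{0,1,2,3::nat}. \<Sum>j\<in>{0,1,2,3::nat}. cnj (f1 i) * \<rho> $$ (i, j) * f1 j)"
  have "\<rho> \<in> carrier_mat 4 4" using P unfolding psd_def by blast
  hence d: "dim_row \<rho> = 4" by blast
  have tr: "\<rho> $$ (0,0) + \<rho> $$ (1,1) + \<rho> $$ (2,2) + \<rho> $$ (3,3) = 1"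
    using T unfolding mtrace_def d sum4 .
  have "wf \<rho> 0 0 + wf \<rho> 1 1 + q0 + q1 = (C0*C0 + C1*C1) * (\<rho> $$ (0,0) + \<rho> $$ (1,1) + \<rho> $$ (2,2) + \<rho> $$ (3,3))"
    unfolding q0_def q1_def by (simp add: f0_def f1_def wf_vals cnjC algebra_simps)
  also have "\<dots> = 7/10" unfolding tr C00 C11 by simp
  finally have "Re (wf \<rho> 0 0 + wf \<rho> 1 1 + q0 + q1) = Re (7/10)" by (rule arg_cong)
  hence "Re (wf \<rho> 0 0) + Re (wf \<rho> 1 1) + Re q0 + Re q1 = 7/10" by simp
  moreover have "Re q0 \<ge> 0" "Re q1 \<ge> 0" unfolding q0_def q1_def using psd4_form[OF P] by blast+
  ultimately show ?thesis by linarith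
qed


declare One_nat_def [simp del]

lemma tn_ext: assumes D: "density 4 \<rho>"
  shows "trace_norm (ext_id Dl 2 2 2 \<rho>) = 2 * (Re (wf \<rho> 0 0) + Re (wf \<rho> 1 1))"
proof -
  have P: "psd 4 \<rho>" using D unfolding density_def by simp
  note F = psd2_facts[OF psd_W[OF P]]
  define a where "a = Re (wf \<rho> 0 0)"
  define d where "d = Re (wf \<rho> 1 1)"
  define b where "b = wf \<rho> 0 1"
  have w00: "wf \<rho> 0 0 = complex_of_real a" using F(2) unfolding a_def by simp
  have w11: "wf \<rho> 1 1 = complex_of_real d" using F(4) unfolding d_def by simp
  have w10: "wf \<rho> 1 0 = cnj b" using F(6) unfolding b_def by simp
  have a0: "a \<ge> 0" using F(3) unfolding a_def by simp
  have d0: "d \<ge> 0" using F(5) unfolding d_def by simp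
  have bd: "(cmod b)^2 \<le> a * d" using F(7) unfolding a_def d_def b_def by simp
  have e: "(-1::real)^2 = 1" by simp
  have "ext_id Dl 2 2 2 \<rho> = ml 4 [[(-1)*a, (-1)*b, 0, 0],[(-1)*cnj b, (-1)*d,0,0],[0,0,-(-1)*a,-(-1)*b],[0,0,-(-1)*cnj b,-(-1)*d]]"
    unfolding ext_Dl w00 w11 w10 b_def[symmetric] by simp
  thus ?thesis using tn_block[OF a0 d0 bd e] unfolding a_def d_def by simp
qed

lemma tn_ext_le: assumes D: "density 4 \<rho>" shows "trace_norm (ext_id Dl 2 2 2 \<rho>) \<le> 7/5"
  using tn_ext[OF D] trace_W[of \<rho>] D unfolding density_def by simp

definition rs :: "complex mat" where
  "rs = ml 4 [[2/7, 0, 10*S/7, 0],[0,0,0,0],[10*S/7, 0, 5/7, 0],[0,0,0,0]]"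

lemma cnjS: "cnj S = S" unfolding S_def by simp

lemma psd_P2: "psd 2 (ml 2 [[2/7, 10*S/7],[10*S/7, 5/7]])"
proof (rule psd2_intro[where a="2/7" and d="5/7"])
  have "cmod (10*S/7) = 10/7 * cmod S" by (simp add: norm_divide norm_mult)
  hence "(cmod (10*S/7))^2 = (10/7 * cmod S)^2" by (simp only:)
  also have "\<dots> = (10/7)^2 * (cmod S)^2" by (rule power_mult_distrib)
  also have "\<dots> = 10/49" unfolding cmodS by (simp add: power2_eq_square)
  finally have c: "(cmod (10*S/7))^2 = 10/49" .
  have e01: "ml 2 [[2/7, 10*S/7],[10*S/7, 5/7]] $$ (0,1) = 10*S/7" by simp
  show "(cmod (ml 2 [[2/7, 10*S/7],[10*S/7, 5/7]] $$ (0,1)))^2 \<le> 2/7 * (5/7)" unfolding e01 c by simp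
qed (simp_all add: cnjS)

lemma density_rs: "density 4 rs"
  unfolding density_def
proof
  show "mtrace rs = 1" unfolding mtrace_def rs_def by (simp add: sum4)
  show "psd 4 rs" unfolding psd_def Let_def
  proof (intro conjI allI impI)
    show "rs \<in> carrier_mat 4 4" unfolding rs_def by simp
    fix v :: "complex vec" assume "dim_vec v = 4"
    have eq: "(\<Sum>i<4. \<Sum>j<4. cnj (v $ i) * rs $$ (i, j) * v $ j) =
      cnj (v$0) * ml 2 [[2/7, 10*S/7],[10*S/7, 5/7]] $$ (0,0) * v$0 + cnj (v$0) * ml 2 [[2/7, 10*S/7],[10*S/7, 5/7]] $$ (0,1) * v$2
      + cnj (v$2) * ml 2 [[2/7, 10*S/7],[10*S/7, 5/7]] $$ (1,0) * v$0 + cnj (v$2) * ml 2 [[2/7, 10*S/7],[10*S/7, 5/7]] $$ (1,1) * v$2"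
      unfolding rs_def by (simp add: sum4)
    show "Im (\<Sum>i<4. \<Sum>j<4. cnj (v $ i) * rs $$ (i, j) * v $ j) = 0"
      unfolding eq using psd2_form[OF psd_P2] by blast
    show "0 \<le> Re (\<Sum>i<4. \<Sum>j<4. cnj (v $ i) * rs $$ (i, j) * v $ j)"
      unfolding eq using psd2_form[OF psd_P2] by blast
  qed
qed

lemma tn_rs: "trace_norm (ext_id Dl 2 2 2 rs) = 7/5"
proof -
  have w0: "wf rs 0 0 = 7/10"
  proof -
    have "wf rs 0 0 = 2/35 + 20/7 * (S*S) + 5/14" unfolding wf_def rs_def by (simp add: algebra_simps)
    thus ?thesis unfolding S2 by simp
  qed
  have w1: "wf rs 1 1 = 0" unfolding wf_def rs_def by simp
  have "Re (wf rs 0 0) = 7/10" by (simp only: w0) simp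
  moreover have "Re (wf rs 1 1) = 0" by (simp only: w1) simp
  ultimately
  show ?thesis using tn_ext[OF density_rs] by simp
qed

lemma diamond_Dl: "diamond_norm Dl 2 2 = 7/5"
  unfolding diamond_norm_def
proof (rule cSup_eq_maximum)
  show "7/5 \<in> {trace_norm (ext_id Dl 2 2 2 \<rho>) |\<rho>. density (2 * 2) \<rho>}"
    using tn_rs density_rs by force
  show "\<And>x. x \<in> {trace_norm (ext_id Dl 2 2 2 \<rho>) |\<rho>. density (2 * 2) \<rho>} \<Longrightarrow> x \<le> 7/5"
    using tn_ext_le by force
qed

lemma me_Dl: "me_norm Dl 2 2 = 7/10"
proof -
  have a0: "(1/10::real) \<ge> 0" and d0: "(1/4::real) \<ge> 0" by simp_all
  have bd: "(cmod (S/2))^2 \<le> 1/10 * (1/4)"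
  proof -
    have "(cmod (S/2))^2 = (cmod S)^2 / 4" by (simp add: norm_divide power_divide)
    thus ?thesis by (simp add: cmodS)
  qed
  have e: "(-1::real)^2 = 1" by simp
  have "(1 / of_nat 2) \<cdot>\<^sub>m choi Dl 2 2 = ml 4 [[(-1)*(1/10), (-1)*(S/2), 0, 0],[(-1)*cnj (S/2), (-1)*(1/4),0,0],[0,0,-(-1)*(1/10),-(-1)*(S/2)],[0,0,-(-1)*cnj (S/2),-(-1)*(1/4)]]"
    unfolding choi_Dl by (simp add: cnjS)
  thus ?thesis unfolding me_norm_def using tn_block[OF a0 d0 bd e] by simp
qed

theorem corollary7:
  fixes M N :: "nat \<Rightarrow> complex mat"
  defines "M \<equiv> (\<lambda>i. let M0 = mat_of_rows_list 2 [[1/10, 0], [0, 1/5]]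
                    in if i = 0 then M0 else 1\<^sub>m 2 - M0)"
      and "N \<equiv> (\<lambda>i. let N0 = mat_of_rows_list 2
                             [[3/10, complex_of_real (sqrt (1/10))],
                              [complex_of_real (sqrt (1/10)), 7/10]]
                    in if i = 0 then N0 else 1\<^sub>m 2 - N0)"
  shows "povm 2 2 M \<and> povm 2 2 N \<and> M 0 * N 0 \<noteq> N 0 * M 0 \<and> MEWC 2 2 M N"
proof -
  have M: "M = Mf" unfolding M_def Mf_def by (rule refl)
  have N: "N = Nf" unfolding N_def Nf_def by (rule refl)
  have L: "(\<lambda>\<rho>. meas_channel 2 Mf \<rho> - meas_channel 2 Nf \<rho>) = Dl" unfolding Dl_def by (rule refl)
  show ?thesis unfolding M N MEWC_def Let_def L
    using povm_Mf povm_Nf noncomm diamond_Dl me_Dl by simp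
qed

end
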